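(* Assume $\det D_{m,0}\neq 0$ and $\det Z_1\neq 0$. Then, as $\epsilon\to 0$, \begin{align*} \det\beta_{m+2}=&\epsilon^{-r}\begin{vmatrix} -mS_D(\beta_m)_1^{-1}& mS_D(\beta_m)^{-1}_1B_{m,1}D_{m,0}^{-1}+B_{m-1,0} \\ mD_{m,0}^{-1}C_{m,0}S_D(\beta_m)_1^{-1}&(m+1)Z_{1}^{-1}-mD_{m,0}^{-1} -mD_{m,0}^{-1}C_{m,0}S_{D}(\beta_m)_{1}^{-1}B_{m,1}D_{m,0}^{-1} +D_{m-1,0} \end{vmatrix}+O(\epsilon^{-r+1}). \end{align*}
   Context: Consider the matrix discrete Painlev\'e I equation $\beta_{n+1}=n\beta_{n}^{-1}-\beta_{n-1}-\beta_{n}-\alpha$, $n=1,2,\ldots$, with $\beta_n,\alpha\in\mathbb{C}^{N\times N}$. Fix $r\in\{1,\dots,N-1\}$ and $m\geq 2$, and write every $N\times N$ matrix in blocks $\begin{pmatrix} A & B\\ C & D\end{pmatrix}$ with $A\in\mathbb{C}^{r\times r}$, $B\in\mathbb{C}^{r\times(N-r)}$, $C\in\mathbb{C}^{(N-r)\times r}$, $D\in\mathbb{C}^{(N-r)\times(N-r)}$. The initial data depend on a small parameter $\epsilon\to0$ as $\beta_{m-1}=\sum_{i\geq 0}\begin{pmatrix}A_{m-1,i}&B_{m-1,i}\\C_{m-1,i}&D_{m-1,i}\end{pmatrix}\epsilon^{i}$, $\beta_{m}=\begin{pmatrix}0&0\\C_{m,0}&D_{m,0}\end{pmatrix}+\sum_{i\geq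 1}\begin{pmatrix}A_{m,i}&B_{m,i}\\C_{m,i}&D_{m,i}\end{pmatrix}\epsilon^{i}$, with $\det\beta_m$ of exact order $\epsilon^{r}$, i.e. $\det\begin{pmatrix}A_{m,1}&B_{m,1}\\C_{m,0}&D_{m,0}\end{pmatrix}\neq 0$, and $\alpha=\begin{pmatrix}\alpha_{11}&\alpha_{12}\\\alpha_{21}&\alpha_{22}\end{pmatrix}$ independent of $\epsilon$. When $\det D_{m,0}\neq0$ set $S_D(\beta_m)_1:=A_{m,1}-B_{m,1}D_{m,0}^{-1}C_{m,0}\in\mathbb{C}^{r\times r}$ (which is then invertible) and $Z_1:=mD_{m,0}^{-1}-D_{m-1,0}-D_{m,0}-\alpha_{22}-D_{m,0}^{-1}C_{m,0}(B_{m-1,0}+\alpha_{12})$. The matrices $\beta_{m+1},\beta_{m+2}$ are obtained from $\beta_{m-1},\beta_m$ by iterating the equation. *)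

theory Defs
  imports "HOL-Analysis.Analysis" "HOL-Library.Landau_Symbols"
begin

text \<open>N x N matrices are indexed by the sum type 'r + 's, with CARD('r) = r and
  CARD('s) = N - r; the left summand indexes the first r rows/columns.\<close>

definition blkA :: "complex ^ ('r::finite + 's::finite) ^ ('r + 's) \<Rightarrow> complex ^ 'r ^ 'r"
  where "blkA M = (\<chi> i j. M $ Inl i $ Inl j)"
definition blkB :: "complex ^ ('r::finite + 's::finite) ^ ('r + 's) \<Rightarrow> complex ^ 's ^ 'r"
  where "blkB M = (\<chi> i j. M $ Inl i $ Inr j)"
definition blkC :: "complex ^ ('r::finite + 's::finite) ^ ('r + 's) \<Rightarrow> complex ^ 'r ^ 's"
  where "blkC M = (\<chi> i j. M $ Inr i $ Inl j)"
definition blkD :: "complex ^ ('r::finite + 's::finite) ^ ('r + 's) \<Rightarrow> complex ^ 's ^ 's"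
  where "blkD M = (\<chi> i j. M $ Inr i $ Inr j)"

definition block :: "complex ^ 'r::finite ^ 'r \<Rightarrow> complex ^ 's::finite ^ 'r \<Rightarrow> complex ^ 'r ^ 's
    \<Rightarrow> complex ^ 's ^ 's \<Rightarrow> complex ^ ('r + 's) ^ ('r + 's)"
  where "block A B C D = (\<chi> i j. case i of
      Inl a \<Rightarrow> (case j of Inl b \<Rightarrow> A $ a $ b | Inr b \<Rightarrow> B $ a $ b)
    | Inr a \<Rightarrow> (case j of Inl b \<Rightarrow> C $ a $ b | Inr b \<Rightarrow> D $ a $ b))"

definition mser :: "(nat \<Rightarrow> complex ^ 'n::finite ^ 'm::finite) \<Rightarrow> complex \<Rightarrow> complex ^ 'n ^ 'm"
  where "mser P \<epsilon> = (\<chi> i j. \<Sum>k. P k $ i $ j * \<epsilon> ^ k)"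

definition dPI_step :: "nat \<Rightarrow> complex ^ 'n::finite ^ 'n \<Rightarrow> complex ^ 'n ^ 'n \<Rightarrow> complex ^ 'n ^ 'n
    \<Rightarrow> complex ^ 'n ^ 'n"
  where "dPI_step n bprev bcur \<alpha> = real n *\<^sub>R matrix_inv bcur - bprev - bcur - \<alpha>"

end

theory Submission
  imports Defs
begin


lemma minv:
  fixes A :: "'a::field^'n^'n" assumes "det A \<noteq> 0"
  shows "A ** matrix_inv A = mat 1" "matrix_inv A ** A = mat 1"
proof -
  have "invertible A" using assms invertible_det_nz by blast
  then have "\<exists>A'. A ** A' = mat 1 \<and> A' ** A = mat 1" unfolding invertible_def .
  then have "A ** matrix_inv A = mat 1 \<and> matrix_inv A ** A = mat 1"
    unfolding matrix_inv_def by (rule someI_ex)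
  thus "A ** matrix_inv A = mat 1" "matrix_inv A ** A = mat 1" by auto
qed

lemma det_nz_of_rinv:
  fixes A :: "'a::field^'n^'n" assumes "A ** B = mat 1" shows "det A \<noteq> 0"
  using det_mul[of A B] assms by auto

lemma minv_unique:
  fixes A :: "'a::field^'n^'n" assumes "A ** B = mat 1" shows "matrix_inv A = B"
proof -
  have d: "det A \<noteq> 0" using det_nz_of_rinv assms by blast
  have "matrix_inv A = matrix_inv A ** (A ** B)" using assms by simp
  also have "\<dots> = (matrix_inv A ** A) ** B" by (simp add: matrix_mul_assoc)
  also have "\<dots> = B" using minv(2)[OF d] by simp
  finally show ?thesis .
qed

lemma matrix_add_rdistrib: "((A::'a::semiring_1^'n^'m) + B) ** C = A ** C + B ** C"
  by (vector matrix_matrix_mult_def sum.distrib[symmetric] field_simps)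
lemma matrix_diff_ldistrib: "(A::'a::ring_1^'n^'m) ** (B - C) = A ** B - A ** C"
  by (vector matrix_matrix_mult_def sum_subtractf[symmetric] field_simps)
lemma matrix_diff_rdistrib: "((A::'a::ring_1^'n^'m) - B) ** C = A ** C - B ** C"
  by (vector matrix_matrix_mult_def sum_subtractf[symmetric] field_simps)
lemma matrix_neg_left: "(- (A::'a::ring_1^'n^'m)) ** C = - (A ** C)"
  by (vector matrix_matrix_mult_def sum_negf[symmetric])
lemma matrix_neg_right: "(A::'a::ring_1^'n^'m) ** (- C) = - (A ** C)"
  by (vector matrix_matrix_mult_def sum_negf[symmetric])
lemma matrix_scaleR_left: "(c *\<^sub>R (A::'a::real_algebra_1^'n^'m)) ** C = c *\<^sub>R (A ** C)"
  by (simp add: scalar_matrix_assoc)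
lemma matrix_scaleR_right: "(A::'a::real_algebra_1^'n^'m) ** (c *\<^sub>R C) = c *\<^sub>R (A ** C)"
  by (simp add: matrix_matrix_mult_def sum_distrib_left mult_ac vec_eq_iff scaleR_sum_right)

lemmas mnorm = matrix_add_ldistrib matrix_add_rdistrib matrix_diff_ldistrib matrix_diff_rdistrib
  matrix_neg_left matrix_neg_right matrix_scaleR_left matrix_scaleR_right matrix_mul_assoc

lemma sum_UNIV_plus: "(\<Sum>x\<in>(UNIV::('a::finite+'b::finite) set). f x) = (\<Sum>x\<in>UNIV. f (Inl x)) + (\<Sum>x\<in>UNIV. f (Inr x))"
proof -
  have "(\<Sum>x\<in>(UNIV::('a+'b) set). f x) = sum f (Inl ` UNIV \<union> Inr ` UNIV)" by (simp only: UNIV_sum[symmetric])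
  also have "\<dots> = sum f (Inl ` UNIV) + sum f (Inr ` UNIV)" by (rule sum.union_disjoint) auto
  also have "\<dots> = (\<Sum>x\<in>UNIV. f (Inl x)) + (\<Sum>x\<in>UNIV. f (Inr x))"
    by (simp add: sum.reindex)
  finally show ?thesis .
qed

lemma prod_UNIV_plus: "(\<Prod>x\<in>(UNIV::('a::finite+'b::finite) set). f x) = (\<Prod>x\<in>UNIV. f (Inl x)) * (\<Prod>x\<in>UNIV. f (Inr x))"
proof -
  have "(\<Prod>x\<in>(UNIV::('a+'b) set). f x) = prod f (Inl ` UNIV \<union> Inr ` UNIV)" by (simp only: UNIV_sum[symmetric])
  also have "\<dots> = prod f (Inl ` UNIV) * prod f (Inr ` UNIV)" by (rule prod.union_disjoint) auto
  also have "\<dots> = (\<Prod>x\<in>UNIV. f (Inl x)) * (\<Prod>x\<in>UNIV. f (Inr x))"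
    by (simp add: prod.reindex)
  finally show ?thesis .
qed

lemma blk_block[simp]:
  "blkA (block A B C D) = A" "blkB (block A B C D) = B" "blkC (block A B C D) = C" "blkD (block A B C D) = D"
  by (simp_all add: blkA_def blkB_def blkC_def blkD_def block_def vec_eq_iff)

lemma block_blk: "block (blkA M) (blkB M) (blkC M) (blkD M) = M"
  by (auto simp: blkA_def blkB_def blkC_def blkD_def block_def vec_eq_iff split: sum.splits)

lemma block_eq_iff: "block A B C D = block A' B' C' D' \<longleftrightarrow> A = A' \<and> B = B' \<and> C = C' \<and> D = D'"
  by (metis blk_block)

lemma block_add[simp]: "block A B C D + block A' B' C' D' = block (A+A') (B+B') (C+C') (D+D')"
  by (auto simp: block_def vec_eq_iff split: sum.splits)
lemma block_diff[simp]: "block A B C D - block A' B' C' D' = block (A-A') (B-B') (C-C') (D-D')"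
  by (auto simp: block_def vec_eq_iff split: sum.splits)
lemma block_neg[simp]: "- block A B C D = block (-A) (-B) (-C) (-D)"
  by (auto simp: block_def vec_eq_iff split: sum.splits)
lemma block_scaleR[simp]: "c *\<^sub>R block A B C D = block (c *\<^sub>R A) (c *\<^sub>R B) (c *\<^sub>R C) (c *\<^sub>R D)"
  by (auto simp: block_def vec_eq_iff split: sum.splits)
lemma block_mult[simp]: "block A B C D ** block A' B' C' D' =
   block (A**A' + B**C') (A**B' + B**D') (C**A' + D**C') (C**B' + D**D')"
  by (auto simp: block_def vec_eq_iff matrix_matrix_mult_def sum_UNIV_plus split: sum.splits)
lemma block_one: "(mat 1 :: complex^('r::finite+'s::finite)^('r+'s)) = block (mat 1) 0 0 (mat 1)"
  by (auto simp: block_def vec_eq_iff mat_def split: sum.splits)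
lemma block_zero: "(0 :: complex^('r::finite+'s::finite)^('r+'s)) = block 0 0 0 0"
  by (auto simp: block_def vec_eq_iff split: sum.splits)



definition md :: "(complex \<Rightarrow> complex^'n::finite^'m::finite) \<Rightarrow> bool" where
  "md F \<longleftrightarrow> (\<forall>i j. (\<lambda>e. F e $ i $ j) field_differentiable (at 0))"

lemma md_const[simp]: "md (\<lambda>e. c)" by (simp add: md_def)
lemma md_add: "md F \<Longrightarrow> md G \<Longrightarrow> md (\<lambda>e. F e + G e)"
  by (simp add: md_def field_differentiable_add)
lemma md_diff: "md F \<Longrightarrow> md G \<Longrightarrow> md (\<lambda>e. F e - G e)"
  by (simp add: md_def field_differentiable_diff)
lemma md_neg: "md F \<Longrightarrow> md (\<lambda>e. - F e)"
  by (simp add: md_def field_differentiable_minus)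
lemma md_scaleR: "md F \<Longrightarrow> md (\<lambda>e. c *\<^sub>R F e)"
proof -
  assume "md F"
  then show ?thesis unfolding md_def scaleR_conv_of_real
    by (auto intro!: field_differentiable_mult)
qed
lemma md_mult: "md F \<Longrightarrow> md G \<Longrightarrow> md (\<lambda>e. F e ** G e)"
  unfolding md_def matrix_matrix_mult_def
  by (auto intro!: field_differentiable_sum field_differentiable_mult)

lemma fd_prod: "finite S \<Longrightarrow> (\<And>i. i \<in> S \<Longrightarrow> f i field_differentiable (at a)) \<Longrightarrow>
   (\<lambda>z. \<Prod>i\<in>S. f i z) field_differentiable (at (a::complex))"
  by (induct S rule: finite_induct) (auto intro!: field_differentiable_mult)

lemma md_det: "md F \<Longrightarrow> (\<lambda>e. det (F e)) field_differentiable (at 0)"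
  unfolding md_def det_def
  by (auto intro!: field_differentiable_sum field_differentiable_mult fd_prod)

definition cram :: "'a::field^'n^'n \<Rightarrow> 'n \<Rightarrow> 'n \<Rightarrow> 'a^'n^'n" where
  "cram A i k = (\<chi> a b. if b = i then (if a = k then 1 else 0) else A$a$b)"

lemma minv_cramer:
  fixes A :: "'a::field^'n::finite^'n"
  assumes d: "det A \<noteq> 0"
  shows "matrix_inv A $ i $ k = det (cram A i k) / det A"
proof -
  let ?x = "(\<chi> j. matrix_inv A $ j $ k)"
  let ?b = "(\<chi> a. if a = k then 1 else 0) :: 'a^'n"
  have "(A *v ?x) $ a = ?b $ a" for a
  proof -
    have "(A *v ?x) $ a = (A ** matrix_inv A) $ a $ k"
      by (simp add: matrix_vector_mult_def matrix_matrix_mult_def)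
    also have "\<dots> = ?b $ a" using minv(1)[OF d] by (simp add: mat_def)
    finally show ?thesis .
  qed
  then have "A *v ?x = ?b" by (simp add: vec_eq_iff)
  then have "?x = (\<chi> k'. det(\<chi> a j. if j=k' then ?b$a else A$a$j) / det A)"
    using cramer[OF d] by blast
  then have "?x $ i = det(\<chi> a j. if j=i then ?b$a else A$a$j) / det A" by simp
  moreover have "(\<chi> a j. if j=i then ?b$a else A$a$j) = cram A i k"
    by (simp add: cram_def vec_eq_iff)
  ultimately show ?thesis by simp
qed

lemma md_cram: assumes "md F" shows "md (\<lambda>e. cram (F e) i k)"
  unfolding md_def cram_def
proof (intro allI)
  fix a b show "(\<lambda>e. (\<chi> a b. if b = i then (if a = k then 1 else 0) else F e $ a $ b) $ a $ b) field_differentiable at 0"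
    using assms by (cases "b = i"; cases "a = k") (auto simp: md_def)
qed

lemma md_inv:
  assumes F: "md F" and d0: "det (F 0) \<noteq> 0"
  shows "md (\<lambda>e. matrix_inv (F e))"
  unfolding md_def
proof (intro allI)
  fix i k
  have c: "isCont (\<lambda>e. det (F e)) 0"
    using md_det[OF F] field_differentiable_imp_continuous_at by blast
  obtain d where d: "d > 0" "\<And>e. dist e 0 < d \<Longrightarrow> dist (det (F e)) (det (F 0)) < norm (det (F 0))"
    using c d0 unfolding continuous_at_eps_delta by (metis zero_less_norm_iff)
  have nz: "det (F e) \<noteq> 0" if "dist e 0 < d" for e
    using d(2)[OF that] by (auto simp: dist_norm)
  have h: "(\<lambda>e. det (cram (F e) i k) / det (F e)) field_differentiable (at 0)"
    using md_det[OF md_cram[OF F]] md_det[OF F] d0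
    by (intro field_differentiable_divide) auto
  show "(\<lambda>e. matrix_inv (F e) $ i $ k) field_differentiable (at 0)"
  proof (rule field_differentiable_transform_within[where S=UNIV and d=d and x=0, OF _ _ _ h])
    fix e :: complex assume "dist e 0 < d"
    then show "det (cram (F e) i k) / det (F e) = matrix_inv (F e) $ i $ k"
      using minv_cramer[OF nz[OF \<open>dist e 0 < d\<close>]] by simp
  qed (auto simp: d(1))
qed

lemma md_cont_det:
  assumes "md F" "det (F 0) \<noteq> 0"
  shows "\<forall>\<^sub>F e in at 0. det (F e) \<noteq> 0"
proof -
  have c: "isCont (\<lambda>e. det (F e)) 0"
    using md_det[OF assms(1)] field_differentiable_imp_continuous_at by blast
  then have "((\<lambda>e. det (F e)) \<longlongrightarrow> det (F 0)) (at 0)" by (simp add: isCont_def)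
  then show ?thesis using assms(2) tendsto_imp_eventually_ne by blast
qed

lemma fd_bigo:
  assumes "g field_differentiable (at (0::complex))"
  shows "\<exists>c. \<forall>\<^sub>F e in at 0. norm (g e - g 0) \<le> c * norm e"
proof -
  obtain D where D: "(g has_field_derivative D) (at 0)" using assms field_differentiable_def by blast
  then have "((\<lambda>e. (g e - g 0) / e) \<longlongrightarrow> D) (at 0)"
    unfolding DERIV_def by simp
  then have "\<forall>\<^sub>F e in at 0. dist ((g e - g 0) / e) D < 1" by (rule tendstoD) simp
  moreover have "\<forall>\<^sub>F e in at (0::complex). e \<noteq> 0" by (simp add: eventually_at_filter)
  ultimately have "\<forall>\<^sub>F e in at 0. norm (g e - g 0) \<le> (norm D + 1) * norm e"
  proof eventually_elim
    case (elim e)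
    have "norm ((g e - g 0) / e) \<le> norm D + 1"
      using elim(1) norm_triangle_ineq2[of "(g e - g 0) / e" D] by (simp add: dist_norm)
    moreover have "norm (g e - g 0) = norm ((g e - g 0) / e) * norm e"
      using elim(2) by (simp add: norm_divide)
    ultimately show ?case by (simp add: mult_right_mono)
  qed
  then show ?thesis by blast
qed


lemma summable_shift:
  fixes c :: "nat \<Rightarrow> complex"
  assumes "summable (\<lambda>k. c k * e^k)"
  shows "summable (\<lambda>k. c (Suc k) * e^k)"
proof (cases "e = 0")
  case True
  then show ?thesis by (simp add: summable_0_powser)
next
  case False
  have "summable (\<lambda>k. c (Suc k) * e^(Suc k))" using assms summable_Suc_iff[of "\<lambda>k. c k * e^k"] by simp
  then have "summable (\<lambda>k. (c (Suc k) * e^(Suc k)) * inverse e)" by (rule summable_mult2)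
  moreover have "(\<lambda>k. (c (Suc k) * e^(Suc k)) * inverse e) = (\<lambda>k. c (Suc k) * e^k)"
    using False by (auto simp: fun_eq_iff field_simps)
  ultimately show ?thesis by simp
qed

lemma ps_fd:
  fixes c :: "nat \<Rightarrow> complex"
  assumes R: "R > 0" and s: "\<And>e. cmod e < R \<Longrightarrow> summable (\<lambda>k. c k * e^k)"
  shows "(\<lambda>e. \<Sum>k. c k * e^k) field_differentiable at 0"
    and "(\<lambda>e. \<Sum>k. c (Suc k) * e^k) field_differentiable at 0"
proof -
  let ?K = "complex_of_real (R/2)"
  have nK: "norm ?K = R/2" using R by simp
  have sK: "summable (\<lambda>k. c k * ?K^k)" using s nK R by simp
  show "(\<lambda>e. \<Sum>k. c k * e^k) field_differentiable at 0"
    unfolding field_differentiable_def using termdiffs_strong[OF sK, of 0] nK R by auto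
  have sK': "summable (\<lambda>k. c (Suc k) * ?K^k)" by (rule summable_shift[OF sK])
  show "(\<lambda>e. \<Sum>k. c (Suc k) * e^k) field_differentiable at 0"
    unfolding field_differentiable_def using termdiffs_strong[OF sK', of 0] nK R by auto
qed

lemma ps_split:
  fixes c :: "nat \<Rightarrow> complex"
  assumes s: "summable (\<lambda>k. c k * e^k)"
  shows "(\<Sum>k. c k * e^k) = c 0 + e * (\<Sum>k. c (Suc k) * e^k)"
proof -
  have s': "summable (\<lambda>k. c (Suc k) * e^k)" by (rule summable_shift[OF s])
  have "(\<Sum>k. c (Suc k) * e^(Suc k)) = (\<Sum>k. c k * e^k) - c 0"
    using suminf_split_head[OF s] by simp
  moreover have "(\<Sum>k. c (Suc k) * e^(Suc k)) = e * (\<Sum>k. c (Suc k) * e^k)"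
    using suminf_mult[OF s', of e] by (simp add: mult_ac)
  ultimately show ?thesis by (metis add.commute diff_add_cancel)
qed

definition dg :: "('n::finite \<Rightarrow> complex) \<Rightarrow> complex^'n^'n" where
  "dg d = (\<chi> i j. if i = j then d i else 0)"

lemma dg_left: "dg d ** M = (\<chi> i j. d i * M$i$j)"
  by (simp add: dg_def matrix_matrix_mult_def vec_eq_iff if_distrib if_distribR sum.delta cong: if_cong)
lemma dg_right: "M ** dg d = (\<chi> i j. M$i$j * d j)"
  by (simp add: dg_def matrix_matrix_mult_def vec_eq_iff if_distrib if_distribR sum.delta' cong: if_cong)
lemma dg_dg: "dg d ** dg d' = dg (\<lambda>i. d i * d' i)"
  unfolding dg_left by (simp add: vec_eq_iff dg_def)
lemma det_dg: "det (dg d) = prod d UNIV"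
  by (subst det_diagonal) (auto simp: dg_def)

lemma schurA:
  fixes a :: "complex^'r::finite^'r" and b :: "complex^'s::finite^'r"
  assumes aa: "a ** a' = mat 1" and zz: "Z ** Zi = mat 1" and Z: "Z = d - c ** a' ** b"
  shows "block a b c d ** block (a' + a' ** b ** Zi ** c ** a') (-(a' ** b ** Zi)) (-(Zi ** c ** a')) Zi = mat 1"
proof -
  have dZ: "d = Z + c ** a' ** b" using Z by simp
  have c1: "\<And>X. X ** a ** a' = X" using aa by (metis matrix_mul_assoc matrix_mul_rid)
  have c2: "\<And>X. X ** Z ** Zi = X" using zz by (metis matrix_mul_assoc matrix_mul_rid)
  show ?thesis unfolding dZ block_one block_mult block_eq_iff
    by (simp add: mnorm aa zz c1 c2 algebra_simps)
qed

lemma schurD: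
  fixes a :: "complex^'r::finite^'r" and b :: "complex^'s::finite^'r"
  assumes dd: "d ** d' = mat 1" and ss: "S ** Si = mat 1" and S: "S = a - b ** d' ** c"
  shows "block a b c d ** block Si (-(Si ** b ** d')) (-(d' ** c ** Si)) (d' + d' ** c ** Si ** b ** d') = mat 1"
proof -
  have aS: "a = S + b ** d' ** c" using S by simp
  have c1: "\<And>X. X ** d ** d' = X" using dd by (metis matrix_mul_assoc matrix_mul_rid)
  have c2: "\<And>X. X ** S ** Si = X" using ss by (metis matrix_mul_assoc matrix_mul_rid)
  show ?thesis unfolding aS block_one block_mult block_eq_iff
    by (simp add: mnorm dd ss c1 c2 algebra_simps)
qed

lemma schurD_exists:
  fixes a :: "complex^'r::finite^'r" and b :: "complex^'s::finite^'r"
  assumes det: "det (block a b c d) \<noteq> 0" and dd: "d' ** d = mat 1"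
  shows "\<exists>x. (a - b ** d' ** c) ** x = mat 1"
proof -
  let ?W = "matrix_inv (block a b c d)"
  have "block a b c d ** block (blkA ?W) (blkB ?W) (blkC ?W) (blkD ?W) = mat 1"
    unfolding block_blk using minv(1)[OF det] .
  then have e1: "a ** blkA ?W + b ** blkC ?W = mat 1" and e2: "c ** blkA ?W + d ** blkC ?W = 0"
    unfolding block_one block_mult block_eq_iff by auto
  have "d' ** (c ** blkA ?W + d ** blkC ?W) = 0" using e2 by simp
  then have q: "blkC ?W = - (d' ** c ** blkA ?W)"
    by (simp add: mnorm dd eq_neg_iff_add_eq_0 add.commute)
  have "(a - b ** d' ** c) ** blkA ?W = mat 1"
    using e1 unfolding q by (simp add: mnorm)
  then show ?thesis by blast
qed



theorem lemma3:
  fixes P Q :: "nat \<Rightarrow> complex ^ ('r::finite + 's::finite) ^ ('r + 's)"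
    and \<alpha> :: "complex ^ ('r + 's) ^ ('r + 's)"
    and m :: nat and R :: real
  assumes m2: "m \<ge> 2"
    and R: "R > 0"
    and conv: "\<And>\<epsilon> i j. cmod \<epsilon> < R \<Longrightarrow>
       summable (\<lambda>k. P k $ i $ j * \<epsilon> ^ k) \<and> summable (\<lambda>k. Q k $ i $ j * \<epsilon> ^ k)"
    and A0: "blkA (Q 0) = 0" and B0: "blkB (Q 0) = 0"
    and exact: "det (block (blkA (Q 1)) (blkB (Q 1)) (blkC (Q 0)) (blkD (Q 0))) \<noteq> 0"
    and detD: "det (blkD (Q 0)) \<noteq> 0"
    and detZ: "det (real m *\<^sub>R matrix_inv (blkD (Q 0)) - blkD (P 0) - blkD (Q 0) - blkD \<alpha>
                 - matrix_inv (blkD (Q 0)) ** blkC (Q 0) ** (blkB (P 0) + blkB \<alpha>)) \<noteq> 0"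
  shows
    "let \<beta>m1 = mser P; \<beta>m = mser Q;
         \<beta>m1' = (\<lambda>\<epsilon>. dPI_step m (\<beta>m1 \<epsilon>) (\<beta>m \<epsilon>) \<alpha>);
         \<beta>m2 = (\<lambda>\<epsilon>. dPI_step (m + 1) (\<beta>m \<epsilon>) (\<beta>m1' \<epsilon>) \<alpha>);
         D0 = blkD (Q 0); C0 = blkC (Q 0); B1 = blkB (Q 1); A1 = blkA (Q 1);
         Dinv = matrix_inv D0;
         S1 = A1 - B1 ** Dinv ** C0;
         Sinv = matrix_inv S1;
         Z1 = real m *\<^sub>R Dinv - blkD (P 0) - D0 - blkD \<alpha> - Dinv ** C0 ** (blkB (P 0) + blkB \<alpha>);
         K = det (block
               (- (real m *\<^sub>R Sinv))
               (real m *\<^sub>R (Sinv ** B1 ** Dinv) + blkB (P 0))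
               (real m *\<^sub>R (Dinv ** C0 ** Sinv))
               (real (m + 1) *\<^sub>R matrix_inv Z1 - real m *\<^sub>R Dinv
                  - real m *\<^sub>R (Dinv ** C0 ** Sinv ** B1 ** Dinv) + blkD (P 0)))
     in (\<lambda>\<epsilon>. det (\<beta>m2 \<epsilon>) - \<epsilon> powi (- int CARD('r)) * K)
          \<in> O[at 0](\<lambda>\<epsilon>. \<epsilon> powi (1 - int CARD('r)))"
proof -
  define D0 where "D0 = blkD (Q 0)"
  define C0 where "C0 = blkC (Q 0)"
  define B1 where "B1 = blkB (Q 1)"
  define A1 where "A1 = blkA (Q 1)"
  define Di where "Di = matrix_inv D0"
  define S1 where "S1 = A1 - B1 ** Di ** C0"
  define Si where "Si = matrix_inv S1"
  define Z1 where "Z1 = real m *\<^sub>R Di - blkD (P 0) - D0 - blkD \<alpha> - Di ** C0 ** (blkB (P 0) + blkB \<alpha>)"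
  define K where "K = det (block
               (- (real m *\<^sub>R Si))
               (real m *\<^sub>R (Si ** B1 ** Di) + blkB (P 0))
               (real m *\<^sub>R (Di ** C0 ** Si))
               (real (m + 1) *\<^sub>R matrix_inv Z1 - real m *\<^sub>R Di
                  - real m *\<^sub>R (Di ** C0 ** Si ** B1 ** Di) + blkD (P 0)))"
  define b2 where "b2 = (\<lambda>e. dPI_step (m + 1) (mser Q e) (dPI_step m (mser P e) (mser Q e) \<alpha>) \<alpha>)"
  define Mm :: "complex \<Rightarrow> complex^('r+'s)^('r+'s)" where
    "Mm = (\<lambda>e. \<chi> i j. case i of Inl _ \<Rightarrow> \<Sum>k. Q (Suc k) $ i $ j * e^k | Inr _ \<Rightarrow> \<Sum>k. Q k $ i $ j * e^k)"
  define Em :: "complex \<Rightarrow> complex^('r+'s)^('r+'s)" where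
    "Em = (\<lambda>e. dg (\<lambda>i. case i of Inl _ \<Rightarrow> e | Inr _ \<Rightarrow> 1))"
  define X where "X = (\<lambda>e. real m *\<^sub>R matrix_inv (Mm e) - (mser P e + Em e ** Mm e + \<alpha>) ** Em e)"
  define Y where "Y = (\<lambda>e. real (m+1) *\<^sub>R (Em e ** matrix_inv (X e) ** Em e) - Em e ** Mm e ** Em e - X e - \<alpha> ** Em e)"
  have mdMm: "md Mm" unfolding md_def
  proof (intro allI)
    fix i j
    show "(\<lambda>e. Mm e $ i $ j) field_differentiable at 0"
    proof (cases i)
      case (Inl a)
      have "(\<lambda>e. \<Sum>k. Q (Suc k) $ i $ j * e^k) field_differentiable at 0"
        by (rule ps_fd(2)[OF R, of "\<lambda>k. Q k $ i $ j"]) (use conv in blast)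
      then show ?thesis using Inl by (simp add: Mm_def)
    next
      case (Inr a)
      have "(\<lambda>e. \<Sum>k. Q k $ i $ j * e^k) field_differentiable at 0"
        by (rule ps_fd(1)[OF R, of "\<lambda>k. Q k $ i $ j"]) (use conv in blast)
      then show ?thesis using Inr by (simp add: Mm_def)
    qed
  qed
  have mdEm: "md Em" unfolding md_def
  proof (intro allI)
    fix i j :: "'r + 's"
    show "(\<lambda>e. Em e $ i $ j) field_differentiable at 0"
      by (cases "i = j"; cases j) (auto simp: Em_def dg_def)
  qed
  have mdP: "md (mser P)" unfolding md_def
  proof (intro allI)
    fix i j
    have "(\<lambda>e. \<Sum>k. P k $ i $ j * e^k) field_differentiable at 0"
      by (rule ps_fd(1)[OF R, of "\<lambda>k. P k $ i $ j"]) (use conv in blast)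
    then show "(\<lambda>e. mser P e $ i $ j) field_differentiable at 0" by (simp add: mser_def)
  qed
  have M0: "Mm 0 = block A1 B1 C0 D0"
    by (auto simp: Mm_def block_def A1_def B1_def C0_def D0_def blkA_def blkB_def blkC_def blkD_def
        vec_eq_iff split: sum.splits)
  have detM0: "det (Mm 0) \<noteq> 0" using exact M0 A1_def B1_def C0_def D0_def by simp
  have mdX: "md X" unfolding X_def
    by (intro md_diff md_scaleR md_inv md_mult md_add mdMm mdEm mdP md_const detM0)
  define pA where "pA = blkA (P 0)"
  define pB where "pB = blkB (P 0)"
  define pC where "pC = blkC (P 0)"
  define pD where "pD = blkD (P 0)"
  define aA where "aA = blkA \<alpha>"
  define aB where "aB = blkB \<alpha>"
  define aC where "aC = blkC \<alpha>"
  define aD where "aD = blkD \<alpha>"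
  have al: "\<alpha> = block aA aB aC aD" unfolding aA_def aB_def aC_def aD_def by (simp add: block_blk)
  have P0: "mser P 0 = block pA pB pC pD" unfolding pA_def pB_def pC_def pD_def block_blk
    by (simp add: mser_def vec_eq_iff)
  have E0: "Em 0 = block 0 0 0 (mat 1)"
    by (auto simp: Em_def dg_def block_def mat_def vec_eq_iff split: sum.splits)
  have DD: "D0 ** Di = mat 1" "Di ** D0 = mat 1" using minv[OF detD] unfolding Di_def D0_def by auto
  obtain x where "S1 ** x = mat 1"
    using schurD_exists[OF exact[folded A1_def B1_def C0_def D0_def] DD(2)] unfolding S1_def by blast
  then have detS1: "det S1 \<noteq> 0" by (rule det_nz_of_rinv)
  have SS: "S1 ** Si = mat 1" "Si ** S1 = mat 1" using minv[OF detS1] unfolding Si_def by auto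
  have W0: "matrix_inv (Mm 0) = block Si (-(Si ** B1 ** Di)) (-(Di ** C0 ** Si)) (Di + Di ** C0 ** Si ** B1 ** Di)"
    unfolding M0 by (rule minv_unique) (rule schurD[OF DD(1) SS(1) S1_def])
  define xa where "xa = real m *\<^sub>R Si"
  define xb where "xb = -(real m *\<^sub>R (Si ** B1 ** Di)) - (pB + aB)"
  define xc where "xc = -(real m *\<^sub>R (Di ** C0 ** Si))"
  define xd where "xd = real m *\<^sub>R (Di + Di ** C0 ** Si ** B1 ** Di) - (pD + D0 + aD)"
  have X0: "X 0 = block xa xb xc xd"
    unfolding X_def W0 unfolding E0 P0 M0 al xa_def xb_def xc_def xd_def
    by (simp add: algebra_simps)
  define a' where "a' = (1 / real m) *\<^sub>R S1"
  have mpos: "real m \<noteq> 0" using m2 by simp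
  have aa: "xa ** a' = mat 1" unfolding xa_def a'_def using mpos by (simp add: mnorm SS)
  have cS: "\<And>Z. Z ** Si ** S1 = Z" using SS(2) by (metis matrix_mul_assoc matrix_mul_rid)
  have Zeq: "Z1 = xd - xc ** a' ** xb" unfolding Z1_def xd_def xc_def a'_def xb_def using mpos
    by (simp add: mnorm cS algebra_simps pB_def pD_def aB_def aD_def)
  have detZ1: "det Z1 \<noteq> 0" using detZ unfolding Z1_def Di_def D0_def C0_def .
  define Zi where "Zi = matrix_inv Z1"
  have ZZ: "Z1 ** Zi = mat 1" using minv(1)[OF detZ1] unfolding Zi_def .
  have XX: "X 0 ** block (a' + a' ** xb ** Zi ** xc ** a') (-(a' ** xb ** Zi)) (-(Zi ** xc ** a')) Zi = mat 1"
    unfolding X0 by (rule schurA[OF aa ZZ Zeq])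
  have detX0: "det (X 0) \<noteq> 0" using det_nz_of_rinv[OF XX] .
  have Xinv0: "matrix_inv (X 0) = block (a' + a' ** xb ** Zi ** xc ** a') (-(a' ** xb ** Zi)) (-(Zi ** xc ** a')) Zi"
    by (rule minv_unique[OF XX])
  have Y0: "Y 0 = block
               (- (real m *\<^sub>R Si))
               (real m *\<^sub>R (Si ** B1 ** Di) + blkB (P 0))
               (real m *\<^sub>R (Di ** C0 ** Si))
               (real (m + 1) *\<^sub>R matrix_inv Z1 - real m *\<^sub>R Di
                  - real m *\<^sub>R (Di ** C0 ** Si ** B1 ** Di) + blkD (P 0))"
    unfolding Y_def Xinv0 unfolding E0 X0 M0 al xa_def xb_def xc_def xd_def Zi_def
    by (simp add: algebra_simps pB_def pD_def)
  have K: "K = det (Y 0)" unfolding Y0 K_def ..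
  have mdY: "md Y" unfolding Y_def
    by (intro md_diff md_scaleR md_inv md_mult md_add mdMm mdEm mdX md_const detX0)
  have key: "det (b2 e) = det (Y e) * inverse e ^ CARD('r)"
    if e: "e \<noteq> 0" "cmod e < R" "det (Mm e) \<noteq> 0" "det (X e) \<noteq> 0" for e
  proof -
    let ?E = "Em e" let ?Ei = "Em (inverse e)"
    have EEi: "?E ** ?Ei = mat 1" "?Ei ** ?E = mat 1"
      unfolding Em_def dg_dg using e(1) by (auto simp: dg_def mat_def vec_eq_iff split: sum.splits)
    have z: "Q 0 $ Inl a $ j = 0" for a j
    proof (cases j)
      case (Inl b)
      have "blkA (Q 0) $ a $ b = 0" using A0 by simp
      then show ?thesis using Inl by (simp add: blkA_def)
    next
      case (Inr b)
      have "blkB (Q 0) $ a $ b = 0" using B0 by simp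
      then show ?thesis using Inr by (simp add: blkB_def)
    qed
    have q: "mser Q e = ?E ** Mm e"
      unfolding Em_def dg_left
    proof (clarsimp simp: vec_eq_iff)
      fix i j
      show "mser Q e $ i $ j = (case i of Inl x \<Rightarrow> e | Inr x \<Rightarrow> 1) * Mm e $ i $ j"
      proof (cases i)
        case (Inl a)
        have "(\<Sum>k. Q k $ i $ j * e^k) = Q 0 $ i $ j + e * (\<Sum>k. Q (Suc k) $ i $ j * e^k)"
          by (rule ps_split[of "\<lambda>k. Q k $ i $ j"]) (use conv e(2) in blast)
        then show ?thesis using Inl z by (simp add: mser_def Mm_def)
      next
        case (Inr a)
        then show ?thesis by (simp add: mser_def Mm_def)
      qed
    qed
    have c1: "\<And>Z. Z ** Mm e ** matrix_inv (Mm e) = Z"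
      using minv(1)[OF e(3)] by (metis matrix_mul_assoc matrix_mul_rid)
    have c2: "\<And>Z. Z ** ?E ** ?Ei = Z" using EEi by (metis matrix_mul_assoc matrix_mul_rid)
    have c3: "\<And>Z. Z ** ?Ei ** ?E = Z" using EEi by (metis matrix_mul_assoc matrix_mul_rid)
    have inv1: "matrix_inv (mser Q e) = matrix_inv (Mm e) ** ?Ei"
      by (rule minv_unique) (simp add: q mnorm c1 EEi)
    have b1: "dPI_step m (mser P e) (mser Q e) \<alpha> = X e ** ?Ei"
      unfolding dPI_step_def inv1 X_def by (simp add: q mnorm c2 EEi algebra_simps)
    have inv2: "matrix_inv (X e ** ?Ei) = ?E ** matrix_inv (X e)"
      by (rule minv_unique) (simp add: mnorm c3 minv(1)[OF e(4)])
    have dE: "det ?Ei = inverse e ^ CARD('r)"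
      unfolding Em_def det_dg prod_UNIV_plus by simp
    have "b2 e = dPI_step (m+1) (mser Q e) (X e ** ?Ei) \<alpha>" unfolding b2_def b1 ..
    also have "\<dots> = Y e ** ?Ei"
      unfolding dPI_step_def inv2 Y_def by (simp add: q mnorm c2 EEi algebra_simps)
    finally have b2e: "b2 e = Y e ** ?Ei" .
    show ?thesis unfolding b2e det_mul dE ..
  qed
  have ev: "\<forall>\<^sub>F e in at 0. e \<noteq> 0 \<and> cmod e < R \<and> det (Mm e) \<noteq> 0 \<and> det (X e) \<noteq> 0"
  proof -
    have "\<forall>\<^sub>F e in at (0::complex). e \<noteq> 0" by (simp add: eventually_at_filter)
    moreover have "\<forall>\<^sub>F e in at (0::complex). cmod e < R"
      using R by (auto simp: eventually_at dist_norm intro!: exI[of _ R])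
    ultimately show ?thesis using md_cont_det[OF mdMm detM0] md_cont_det[OF mdX detX0]
      by eventually_elim auto
  qed
  obtain c where c: "\<forall>\<^sub>F e in at 0. norm (det (Y e) - det (Y 0)) \<le> c * norm e"
    using fd_bigo[OF md_det[OF mdY]] by blast
  have "(\<lambda>e. det (b2 e) - e powi (- int CARD('r)) * K) \<in> O[at 0](\<lambda>e. e powi (1 - int CARD('r)))"
  proof (rule bigoI[where c=c])
    show "\<forall>\<^sub>F e in at 0. norm (det (b2 e) - e powi (- int CARD('r)) * K) \<le> c * norm (e powi (1 - int CARD('r)))"
      using ev c
    proof eventually_elim
      case (elim e)
      have pw: "e powi (- int CARD('r)) = inverse e ^ CARD('r)"
        by (simp add: power_int_minus power_inverse)
      have pw1: "e powi (1 - int CARD('r)) = e powi (- int CARD('r)) * e"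
        using elim(1) power_int_add[of e "- int CARD('r)" 1] by simp
      have "det (b2 e) - e powi (- int CARD('r)) * K = e powi (- int CARD('r)) * (det (Y e) - det (Y 0))"
        using key elim(1) unfolding K pw by (simp add: algebra_simps)
      then have "norm (det (b2 e) - e powi (- int CARD('r)) * K) = norm (e powi (- int CARD('r))) * norm (det (Y e) - det (Y 0))"
        by (simp add: norm_mult)
      also have "\<dots> \<le> norm (e powi (- int CARD('r))) * (c * norm e)"
        using elim(2) by (simp add: mult_left_mono)
      also have "\<dots> = c * norm (e powi (1 - int CARD('r)))"
        unfolding pw1 by (simp add: norm_mult)
      finally show ?case .
    qed
  qed
  then show ?thesis unfolding Let_def b2_def K_def Z1_def Si_def S1_def Di_def A1_def B1_def C0_def D0_def .
qed


end
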